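(* Let $L,d\geq 1$ and let $G$ be an $(L,d)$-almost-biregular graph. Then $G$ has a non-empty subgraph $G'$ with average degree at least $d/2$ and maximum degree at most $4Ld$.
   Context: A bipartite graph $G$ is $(L,d)$-almost-biregular if it has parts $A$ and $B$ (with $A$ non-empty) such that $d_G(v)=d$ for every $v\in B$, and, writing $D=e(G)/|A|$, we have $D\geq d$ (equivalently $|A|\leq|B|$) and $d_G(u)\leq LD$ for every $u\in A$. Average degree is $2e/|V|$. *)

theory Defs
  imports Complex_Main
begin

definition simple_graph :: "'a set \<Rightarrow> 'a set set \<Rightarrow> bool" where
  "simple_graph V E \<longleftrightarrow> finite V \<and> (\<forall>e\<in>E. e \<subseteq> V \<and> card e = 2)"

definition degree :: "'a set set \<Rightarrow> 'a \<Rightarrow> nat" where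
  "degree E v = card {e\<in>E. v \<in> e}"

definition bipartite_parts :: "'a set \<Rightarrow> 'a set set \<Rightarrow> 'a set \<Rightarrow> 'a set \<Rightarrow> bool" where
  "bipartite_parts V E A B \<longleftrightarrow> A \<union> B = V \<and> A \<inter> B = {} \<and>
     (\<forall>e\<in>E. \<exists>a\<in>A. \<exists>b\<in>B. e = {a, b})"

definition almost_biregular :: "real \<Rightarrow> nat \<Rightarrow> 'a set \<Rightarrow> 'a set set \<Rightarrow> bool" where
  "almost_biregular L d V E \<longleftrightarrow> simple_graph V E \<and>
     (\<exists>A B. bipartite_parts V E A B \<and> A \<noteq> {} \<and>
        (\<forall>v\<in>B. degree E v = d) \<and>
        (let D = real (card E) / real (card A) in
           real d \<le> D \<and> (\<forall>u\<in>A. real (degree E u) \<le> L * D)))"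

definition subgraph :: "'a set \<Rightarrow> 'a set set \<Rightarrow> 'a set \<Rightarrow> 'a set set \<Rightarrow> bool" where
  "subgraph V' E' V E \<longleftrightarrow> V' \<subseteq> V \<and> E' \<subseteq> E \<and> (\<forall>e\<in>E'. e \<subseteq> V')"

definition average_degree :: "'a set \<Rightarrow> 'a set set \<Rightarrow> real" where
  "average_degree V E = 2 * real (card E) / real (card V)"

end

theory Submission
  imports Defs
begin

lemma greedy:
  fixes R :: "'a \<Rightarrow> 'b \<Rightarrow> bool" and M :: real
  assumes fA: "finite A" and fB: "finite B"
    and dB: "\<And>b. b\<in>B \<Longrightarrow> card {u\<in>A. R u b} = d"
    and dA: "\<And>u. u\<in>A \<Longrightarrow> real (card {b\<in>B. R u b}) \<le> M"
    and M0: "M \<ge> 0"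
    and K: "K < card B"
  shows "k \<le> K \<Longrightarrow> \<exists>S\<subseteq>B. card S = k \<and>
     (\<Sum>u\<in>A. (real (card {b\<in>S. R u b}))^2) \<le> real d * real k + M * real d / real (card B - K) * (real k)^2"
proof (induction k)
  case 0 show ?case by (intro exI[of _ "{}"]) simp
next
  case (Suc k)
  then obtain S where S: "S \<subseteq> B" "card S = k" and Q: "(\<Sum>u\<in>A. (real (card {b\<in>S. R u b}))^2) \<le> real d * real k + M * real d / real (card B - K) * (real k)^2" by auto
  define x where "x u = real (card {b\<in>S. R u b})" for u
  define c where "c = M * real d / real (card B - K)"
  have c0: "c \<ge> 0" using M0 by (simp add: c_def)
  have fS: "finite S" using S fB finite_subset by blast
  have sumx: "(\<Sum>u\<in>A. x u) = real d * real k"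
  proof -
    have "(\<Sum>u\<in>A. x u) = (\<Sum>u\<in>A. \<Sum>b\<in>{b\<in>S. R u b}. 1::real)" by (simp add: x_def)
    also have "\<dots> = (\<Sum>b\<in>S. \<Sum>u\<in>{u\<in>A. R u b}. 1::real)" by (rule sum.swap_restrict[OF fA fS])
    also have "\<dots> = (\<Sum>b\<in>S. real d)" using S dB by (intro sum.cong) auto
    finally show ?thesis using S by simp
  qed
  define Bs where "Bs = B - S"
  have fBs: "finite Bs" using fB by (simp add: Bs_def)
  have cardBs: "card Bs = card B - k" using S fS by (simp add: Bs_def card_Diff_subset)
  have kK: "k < K" using Suc by simp
  have pos: "card Bs > 0" using cardBs kK K by simp
  have key: "(\<Sum>b\<in>Bs. \<Sum>u\<in>{u\<in>A. R u b}. x u) \<le> M * (real d * real k)"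
  proof -
    have "(\<Sum>b\<in>Bs. \<Sum>u\<in>{u\<in>A. R u b}. x u) = (\<Sum>u\<in>A. \<Sum>b\<in>{b\<in>Bs. R u b}. x u)"
      using sum.swap_restrict[OF fA fBs, of "\<lambda>u b. x u" R] by simp
    also have "\<dots> = (\<Sum>u\<in>A. x u * real (card {b\<in>Bs. R u b}))" by (simp add: mult.commute)
    also have "\<dots> \<le> (\<Sum>u\<in>A. x u * M)"
    proof (rule sum_mono)
      fix u assume u: "u\<in>A"
      have "card {b\<in>Bs. R u b} \<le> card {b\<in>B. R u b}" using fB by (intro card_mono) (auto simp: Bs_def)
      hence "real (card {b\<in>Bs. R u b}) \<le> M" using dA[OF u] by linarith
      thus "x u * real (card {b\<in>Bs. R u b}) \<le> x u * M" by (intro mult_left_mono) (auto simp: x_def)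
    qed
    also have "\<dots> = M * (real d * real k)" using sumx by (simp add: sum_distrib_left[symmetric] mult.commute)
    finally show ?thesis .
  qed
  have "\<exists>b\<in>Bs. (\<Sum>u\<in>{u\<in>A. R u b}. x u) \<le> M * (real d * real k) / real (card Bs)"
  proof (rule ccontr)
    assume "\<not> ?thesis"
    hence "\<forall>b\<in>Bs. (\<Sum>u\<in>{u\<in>A. R u b}. x u) > M * (real d * real k) / real (card Bs)" by force
    hence "(\<Sum>b\<in>Bs. M * (real d * real k) / real (card Bs)) < (\<Sum>b\<in>Bs. \<Sum>u\<in>{u\<in>A. R u b}. x u)"
      using pos fBs by (intro sum_strict_mono) auto
    thus False using key pos by simp
  qed
  then obtain b where b: "b \<in> Bs" "(\<Sum>u\<in>{u\<in>A. R u b}. x u) \<le> M * (real d * real k) / real (card Bs)" by blast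
  have bB: "b \<in> B" and bS: "b \<notin> S" using b by (auto simp: Bs_def)
  have xs: "real (card {b'\<in>insert b S. R u b'}) = x u + (if R u b then 1 else 0)" for u
  proof (cases "R u b")
    case True
    hence "{b'\<in>insert b S. R u b'} = insert b {b'\<in>S. R u b'}" by auto
    thus ?thesis using True fS bS by (simp add: x_def)
  next
    case False
    hence "{b'\<in>insert b S. R u b'} = {b'\<in>S. R u b'}" by auto
    thus ?thesis using False by (simp add: x_def)
  qed
  have ones: "(\<Sum>u\<in>A. if R u b then (1::real) else 0) = real d"
    using fA dB[OF bB] by (simp add: sum.inter_filter[symmetric])
  have "(\<Sum>u\<in>A. (real (card {b'\<in>insert b S. R u b'}))^2)
      = (\<Sum>u\<in>A. (x u)^2 + (2 * (if R u b then x u else 0) + (if R u b then 1 else 0)))"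
    by (rule sum.cong[OF refl], unfold xs) (auto simp: power2_eq_square algebra_simps)
  also have "\<dots> = (\<Sum>u\<in>A. (x u)^2) + 2 * (\<Sum>u\<in>{u\<in>A. R u b}. x u) + real d"
    using fA dB[OF bB] ones by (simp add: sum.distrib sum_distrib_left[symmetric] sum.inter_filter)
  also have "\<dots> \<le> real d * real k + c * (real k)^2 + 2 * (c * real k) + real d"
  proof -
    have "M * (real d * real k) / real (card Bs) \<le> c * real k"
    proof -
      have "real (card B - K) \<le> real (card Bs)" using cardBs kK by simp
      moreover have "real (card B - K) > 0" using K by simp
      ultimately have "M * (real d * real k) / real (card Bs) \<le> M * (real d * real k) / real (card B - K)"
        using M0 by (intro divide_left_mono) auto
      thus ?thesis by (simp add: c_def)
    qed
    hence hb: "(\<Sum>u\<in>{u\<in>A. R u b}. x u) \<le> c * real k" using b(2) by linarith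
    have Qc: "(\<Sum>u\<in>A. (x u)^2) \<le> real d * real k + c * (real k)^2" using Q by (simp add: x_def c_def)
    show ?thesis using hb Qc by linarith
  qed
  also have "\<dots> \<le> real d * real (Suc k) + c * (real (Suc k))^2"
    using c0 by (simp add: power2_eq_square algebra_simps)
  finally show ?case using S bB bS fS unfolding c_def
    by (intro exI[of _ "insert b S"]) auto
qed


lemma edge_count:
  assumes bp: "bipartite_parts V E A B" and fA: "finite A" and fB: "finite B"
    and A0: "A0 \<subseteq> A" and S0: "S0 \<subseteq> B"
  shows "card {e\<in>E. e \<subseteq> A0 \<union> S0} = (\<Sum>u\<in>A0. card {b\<in>S0. {u,b}\<in>E})"
proof -
  have disj: "A \<inter> B = {}" using bp by (simp add: bipartite_parts_def)
  have eq: "{e\<in>E. e \<subseteq> A0 \<union> S0} = (\<lambda>(u,b). {u,b}) ` (SIGMA u:A0. {b\<in>S0. {u,b}\<in>E})"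
  proof
    show "{e\<in>E. e \<subseteq> A0 \<union> S0} \<subseteq> (\<lambda>(u,b). {u,b}) ` (SIGMA u:A0. {b\<in>S0. {u,b}\<in>E})"
    proof
      fix e assume "e \<in> {e\<in>E. e \<subseteq> A0 \<union> S0}"
      then have e: "e\<in>E" "e \<subseteq> A0 \<union> S0" by auto
      obtain u b where ub: "u\<in>A" "b\<in>B" "e={u,b}" using bp e(1) unfolding bipartite_parts_def by blast
      have "u\<in>A0" using ub e(2) S0 disj by auto
      moreover have "b\<in>S0" using ub e(2) A0 disj by auto
      ultimately show "e \<in> (\<lambda>(u,b). {u,b}) ` (SIGMA u:A0. {b\<in>S0. {u,b}\<in>E})"
        using ub e(1) by (auto intro!: image_eqI[where x="(u,b)"])
    qed
    show "(\<lambda>(u,b). {u,b}) ` (SIGMA u:A0. {b\<in>S0. {u,b}\<in>E}) \<subseteq> {e\<in>E. e \<subseteq> A0 \<union> S0}"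
      by auto
  qed
  have inj: "inj_on (\<lambda>(u,b). {u,b}) (SIGMA u:A0. {b\<in>S0. {u,b}\<in>E})"
    using A0 S0 disj by (auto simp: inj_on_def doubleton_eq_iff)
  have fS0: "finite S0" using S0 fB finite_subset by blast
  have fin: "finite A0" "\<forall>u\<in>A0. finite {b\<in>S0. {u,b}\<in>E}"
    using A0 fA finite_subset fS0 by auto
  show ?thesis unfolding eq card_image[OF inj] using fin by simp
qed

lemma degB:
  assumes bp: "bipartite_parts V E A B" and b: "b \<in> B"
  shows "degree E b = card {u\<in>A. {u,b}\<in>E}"
proof -
  have disj: "A \<inter> B = {}" using bp by (simp add: bipartite_parts_def)
  have eq: "{e\<in>E. b\<in>e} = (\<lambda>u. {u,b}) ` {u\<in>A. {u,b}\<in>E}"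
  proof
    show "{e\<in>E. b\<in>e} \<subseteq> (\<lambda>u. {u,b}) ` {u\<in>A. {u,b}\<in>E}"
    proof
      fix e assume "e \<in> {e\<in>E. b\<in>e}"
      then have e: "e\<in>E" "b\<in>e" by auto
      obtain u b' where ub: "u\<in>A" "b'\<in>B" "e={u,b'}" using bp e(1) unfolding bipartite_parts_def by blast
      have "b' = b" using ub e(2) b disj by auto
      thus "e \<in> (\<lambda>u. {u,b}) ` {u\<in>A. {u,b}\<in>E}" using ub e(1) by auto
    qed
    show "(\<lambda>u. {u,b}) ` {u\<in>A. {u,b}\<in>E} \<subseteq> {e\<in>E. b\<in>e}" by auto
  qed
  have inj: "inj_on (\<lambda>u. {u,b}) {u\<in>A. {u,b}\<in>E}"
    using b disj by (auto simp: inj_on_def doubleton_eq_iff)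
  show ?thesis unfolding degree_def eq card_image[OF inj] ..
qed

lemma degA:
  assumes bp: "bipartite_parts V E A B" and u: "u \<in> A"
  shows "degree E u = card {b\<in>B. {u,b}\<in>E}"
proof -
  have disj: "A \<inter> B = {}" using bp by (simp add: bipartite_parts_def)
  have eq: "{e\<in>E. u\<in>e} = (\<lambda>b. {u,b}) ` {b\<in>B. {u,b}\<in>E}"
  proof
    show "{e\<in>E. u\<in>e} \<subseteq> (\<lambda>b. {u,b}) ` {b\<in>B. {u,b}\<in>E}"
    proof
      fix e assume "e \<in> {e\<in>E. u\<in>e}"
      then have e: "e\<in>E" "u\<in>e" by auto
      obtain u' b where ub: "u'\<in>A" "b\<in>B" "e={u',b}" using bp e(1) unfolding bipartite_parts_def by blast
      have "u' = u" using ub e(2) u disj by auto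
      thus "e \<in> (\<lambda>b. {u,b}) ` {b\<in>B. {u,b}\<in>E}" using ub e(1) by auto
    qed
    show "(\<lambda>b. {u,b}) ` {b\<in>B. {u,b}\<in>E} \<subseteq> {e\<in>E. u\<in>e}" by auto
  qed
  have inj: "inj_on (\<lambda>b. {u,b}) {b\<in>B. {u,b}\<in>E}"
    using u disj by (auto simp: inj_on_def doubleton_eq_iff)
  show ?thesis unfolding degree_def eq card_image[OF inj] ..
qed

theorem lemma3p7:
  fixes L :: real and d :: nat and V :: "'a set" and E :: "'a set set"
  assumes "L \<ge> 1" and "d \<ge> 1"
    and "almost_biregular L d V E"
  shows "\<exists>V' E'. subgraph V' E' V E \<and> V' \<noteq> {} \<and>
           average_degree V' E' \<ge> real d / 2 \<and>
           (\<forall>v\<in>V'. real (degree E' v) \<le> 4 * L * real d)"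
proof -
  have L1: "L \<ge> 1" and d1: "d \<ge> 1" using assms(1,2) .
  from assms(3) obtain A B where sg: "simple_graph V E" and bp: "bipartite_parts V E A B"
    and An: "A \<noteq> {}" and dBv: "\<forall>v\<in>B. degree E v = d"
    and Dd: "real d \<le> real (card E) / real (card A)"
    and degAv: "\<forall>u\<in>A. real (degree E u) \<le> L * (real (card E) / real (card A))"
    unfolding almost_biregular_def Let_def by blast
  have fV: "finite V" and eV: "\<forall>e\<in>E. e \<subseteq> V" using sg by (auto simp: simple_graph_def)
  have V: "A \<union> B = V" "A \<inter> B = {}" using bp by (auto simp: bipartite_parts_def)
  have fA: "finite A" and fB: "finite B" using V fV finite_subset by auto
  have fE: "finite E" using eV fV by (meson PowI finite_Pow_iff finite_subset subsetI)
  define a where "a = card A"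
  define n where "n = card B"
  have a0: "a > 0" using An fA by (simp add: a_def card_gt_0_iff)
  have cardE: "card E = d * n"
  proof -
    have "{e\<in>E. e \<subseteq> A \<union> B} = E" using eV V by auto
    hence "card E = (\<Sum>u\<in>A. card {b\<in>B. {u,b}\<in>E})"
      using edge_count[OF bp fA fB subset_refl subset_refl] by simp
    also have "\<dots> = (\<Sum>u\<in>A. \<Sum>b\<in>{b\<in>B. {u,b}\<in>E}. 1)" by simp
    also have "\<dots> = (\<Sum>b\<in>B. \<Sum>u\<in>{u\<in>A. {u,b}\<in>E}. 1)"
      by (rule sum.swap_restrict[OF fA fB])
    also have "\<dots> = (\<Sum>b\<in>B. d)" using degB[OF bp] dBv by (intro sum.cong) auto
    finally show ?thesis by (simp add: n_def)
  qed
  define D where "D = real d * real n / real a"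
  have DE: "real (card E) / real (card A) = D" by (simp add: D_def cardE a_def)
  have na: "real a \<le> real n"
  proof -
    have "real d * real a \<le> real d * real n"
      using Dd a0 unfolding DE D_def by (simp add: pos_le_divide_eq)
    thus ?thesis using d1 by simp
  qed
  have D0: "D \<ge> 0" by (simp add: D_def)
  have degAb: "\<And>u. u\<in>A \<Longrightarrow> real (card {b\<in>B. {u,b}\<in>E}) \<le> L * D"
    using degAv degA[OF bp] DE by metis
  have dle: "real d \<le> 4 * L * real d"
  proof -
    have "1 * real d \<le> (4 * L) * real d" using L1 by (intro mult_right_mono) auto
    thus ?thesis by simp
  qed
  show ?thesis
  proof (cases "n \<le> 4 * a")
    case True
    have cardV: "card V = a + n" using V fA fB by (simp add: a_def n_def card_Un_disjoint[symmetric])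
    have pos: "real a + real n > 0" using a0 by simp
    have avg: "real d / 2 \<le> average_degree V E"
    proof -
      have "real d / 2 \<le> 2 * (real d * real n) / (real a + real n)"
      proof (subst pos_le_divide_eq[OF pos])
        have e1: "real d / 2 * (real a + real n) = real d * real a / 2 + real d * real n / 2"
          by (simp add: algebra_simps)
        have "real d * real a \<le> real d * real n" using na by (intro mult_left_mono) auto
        moreover have "real d * real n \<ge> 0" by simp
        ultimately show "real d / 2 * (real a + real n) \<le> 2 * (real d * real n)" using e1 by linarith
      qed
      thus ?thesis by (simp add: average_degree_def cardE cardV)
    qed
    have deg: "\<forall>v\<in>V. real (degree E v) \<le> 4 * L * real d"
    proof
      fix v assume "v \<in> V"
      then consider "v \<in> A" | "v \<in> B" using V by auto
      thus "real (degree E v) \<le> 4 * L * real d"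
      proof cases
        case 1
        have "D \<le> 4 * real d"
        proof -
          have "real d * real n \<le> real d * (4 * real a)" using True by (intro mult_left_mono) auto
          thus ?thesis using a0 by (simp add: D_def pos_divide_le_eq algebra_simps)
        qed
        hence "L * D \<le> L * (4 * real d)" using L1 by (intro mult_left_mono) auto
        thus ?thesis using degAv 1 DE by (simp add: algebra_simps) (smt (verit) mult.commute)
      next
        case 2 thus ?thesis using dBv dle by simp
      qed
    qed
    show ?thesis
      by (intro exI[of _ V] exI[of _ E]) (use avg deg An V eV in \<open>auto simp: subgraph_def\<close>)
  next
    case False
    hence n4: "4 * a < n" by simp
    show ?thesis
    proof (cases "d = 1")
      case True
      obtain b where b: "b \<in> B" using n4 by (metis n_def card.empty ex_in_conv less_nat_zero_code)
      have "card {e\<in>E. b\<in>e} = 1" using dBv b True by (simp add: degree_def)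
      then obtain e where "{e\<in>E. b\<in>e} = {e}" using card_1_singletonE by blast
      hence e: "e \<in> E" "b \<in> e" by auto
      obtain u b' where ub: "u\<in>A" "b'\<in>B" "e={u,b'}" using bp e(1) unfolding bipartite_parts_def by blast
      have bb: "b' = b" and ub2: "u \<noteq> b" using ub e(2) b V(2) by auto
      have sub: "subgraph {u,b} {e} V E" using ub bb e V by (auto simp: subgraph_def)
      have avg: "average_degree {u,b} {e} = 1" using ub2 by (simp add: average_degree_def)
      have deg: "real (degree {e} v) \<le> 4 * L * real d" for v
      proof -
        have "degree {e} v \<le> card {e}" unfolding degree_def by (intro card_mono) auto
        thus ?thesis using dle True by simp
      qed
      show ?thesis using sub avg deg True by (intro exI[of _ "{u,b}"] exI[of _ "{e}"]) auto
    next
      case False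
      hence d2: "d \<ge> 2" using d1 by simp
      define R where "R u b = ({u,b} \<in> E)" for u b
      define M where "M = L * D"
      have M0: "M \<ge> 0" using L1 D0 by (simp add: M_def)
      have "\<exists>S\<subseteq>B. card S = a \<and>
        (\<Sum>u\<in>A. (real (card {b\<in>S. R u b}))^2) \<le> real d * real a + M * real d / real (card B - a) * (real a)^2"
        by (rule greedy[OF fA fB _ _ M0, of R d a a])
           (use degB[OF bp] dBv degAb n4 in \<open>auto simp: R_def M_def n_def\<close>)
      then obtain S where S: "S \<subseteq> B" "card S = a"
        and Q: "(\<Sum>u\<in>A. (real (card {b\<in>S. {u,b}\<in>E}))^2) \<le> real d * real a + M * real d / real (n - a) * (real a)^2"
        by (auto simp: R_def n_def)
      define x where "x u = real (card {b\<in>S. {u,b}\<in>E})" for u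
      define T where "T = 4 * L * real d"
      have T0: "T > 0" using L1 d1 by (simp add: T_def)
      define A' where "A' = {u\<in>A. x u \<le> T}"
      define V' where "V' = A' \<union> S"
      define E' where "E' = {e\<in>E. e \<subseteq> V'}"
      have A'A: "A' \<subseteq> A" by (auto simp: A'_def)
      have fS: "finite S" using S fB finite_subset by blast
      have fA': "finite A'" using A'A fA finite_subset by blast
      have cardE': "real (card E') = (\<Sum>u\<in>A'. x u)"
        using edge_count[OF bp fA fB A'A S(1)] by (simp add: E'_def V'_def x_def)
      have sumx: "(\<Sum>u\<in>A. x u) = real d * real a"
      proof -
        have "(\<Sum>u\<in>A. x u) = (\<Sum>u\<in>A. \<Sum>b\<in>{b\<in>S. {u,b}\<in>E}. 1::real)" by (simp add: x_def)
        also have "\<dots> = (\<Sum>b\<in>S. \<Sum>u\<in>{u\<in>A. {u,b}\<in>E}. 1::real)" by (rule sum.swap_restrict[OF fA fS])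
        also have "\<dots> = (\<Sum>b\<in>S. real d)" using S degB[OF bp] dBv by (intro sum.cong) auto
        finally show ?thesis using S by simp
      qed
      have split: "(\<Sum>u\<in>A. x u) = (\<Sum>u\<in>A - A'. x u) + (\<Sum>u\<in>A'. x u)"
        using sum.subset_diff[OF A'A fA] .
      have bad: "(\<Sum>u\<in>A - A'. x u) \<le> (\<Sum>u\<in>A. (x u)^2) / T"
      proof -
        have "(\<Sum>u\<in>A - A'. x u) \<le> (\<Sum>u\<in>A - A'. (x u)^2 / T)"
        proof (rule sum_mono)
          fix u assume u: "u \<in> A - A'"
          hence xT: "T < x u" by (auto simp: A'_def)
          have "x u * T \<le> x u * x u" using xT T0 by (intro mult_left_mono) auto
          thus "x u \<le> (x u)^2 / T" using T0 by (simp add: pos_le_divide_eq power2_eq_square)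
        qed
        also have "\<dots> \<le> (\<Sum>u\<in>A. (x u)^2 / T)"
          using fA T0 by (intro sum_mono2) auto
        also have "\<dots> = (\<Sum>u\<in>A. (x u)^2) / T" by (simp add: sum_divide_distrib)
        finally show ?thesis .
      qed
      define z where "z = real d * real a"
      define y where "y = L * real d * z"
      define r where "r = real n / (real n - real a)"
      have nam: "real n - real a > 0" using n4 by simp
      have r_le: "r \<le> 4/3" using n4 nam by (simp add: r_def pos_divide_le_eq)
      have y0: "y \<ge> 0" using L1 by (simp add: y_def z_def)
      have Mexp: "M * real d / real (n - a) * (real a)^2 = y * r"
        using a0 nam n4 by (simp add: M_def D_def y_def z_def r_def of_nat_diff power2_eq_square field_simps)
      have "y * r \<le> y * (4/3)" using r_le y0 by (intro mult_left_mono) auto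
      have Ld: "2 * z \<le> (L * real d) * z"
      proof -
        have "1 * real d \<le> L * real d" using L1 by (intro mult_right_mono) auto
        moreover have "real d \<ge> 2" using d2 by simp
        ultimately have "2 \<le> L * real d" by linarith
        thus ?thesis by (intro mult_right_mono) (auto simp: z_def)
      qed
      have yz: "y = (L * real d) * z" by (simp add: y_def)
      have Qle: "(\<Sum>u\<in>A. (x u)^2) \<le> T * (z / 2)"
      proof -
        have "T * (z / 2) = 2 * y" by (simp add: T_def y_def algebra_simps)
        moreover have "(\<Sum>u\<in>A. (x u)^2) \<le> z + y * r" using Q Mexp by (simp add: x_def z_def)
        moreover have "2 * z \<le> y" using Ld yz by simp
        ultimately show ?thesis using \<open>y * r \<le> y * (4/3)\<close> y0 by linarith
      qed
      have "(\<Sum>u\<in>A. (x u)^2) / T \<le> z / 2" using Qle T0 by (simp add: pos_divide_le_eq mult.commute)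
      hence kept: "real (card E') \<ge> z / 2" using cardE' split sumx bad z_def by linarith
      have Sne: "S \<noteq> {}" using S a0 by auto
      have fV': "finite V'" using fA' fS by (simp add: V'_def)
      have cV: "card V' \<le> a + a"
      proof -
        have "card V' \<le> card A' + card S" unfolding V'_def by (rule card_Un_le)
        moreover have "card A' \<le> a" using card_mono[OF fA A'A] by (simp add: a_def)
        ultimately show ?thesis using S by simp
      qed
      have cV0: "real (card V') > 0" using fV' Sne by (simp add: V'_def card_gt_0_iff)
      have avg: "real d / 2 \<le> average_degree V' E'"
      proof -
        have "real d / 2 * real (card V') \<le> real d / 2 * (2 * real a)"
          using cV by (intro mult_left_mono) auto
        hence "real d / 2 * real (card V') \<le> 2 * real (card E')" using kept z_def by simp
        thus ?thesis using cV0 by (simp add: average_degree_def pos_le_divide_eq)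
      qed
      have sub: "subgraph V' E' V E"
        using A'A S V by (auto simp: subgraph_def E'_def V'_def)
      have deg: "\<forall>v\<in>V'. real (degree E' v) \<le> 4 * L * real d"
      proof
        fix v assume "v \<in> V'"
        then consider "v \<in> A'" | "v \<in> S" by (auto simp: V'_def)
        thus "real (degree E' v) \<le> 4 * L * real d"
        proof cases
          case 1
          have vA: "v \<in> A" using 1 A'A by auto
          have "{e\<in>E'. v\<in>e} \<subseteq> {e\<in>E. e \<subseteq> {v} \<union> S}"
          proof
            fix e assume "e \<in> {e\<in>E'. v\<in>e}"
            then have e: "e\<in>E" "e \<subseteq> V'" "v \<in> e" by (auto simp: E'_def)
            obtain u b where ub: "u\<in>A" "b\<in>B" "e={u,b}" using bp e(1) unfolding bipartite_parts_def by blast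
            have "v = u" using ub e(3) vA V(2) by auto
            moreover have "b \<in> S" using ub e(2) A'A V(2) by (auto simp: V'_def)
            ultimately show "e \<in> {e\<in>E. e \<subseteq> {v} \<union> S}" using ub e(1) by auto
          qed
          hence "degree E' v \<le> card {e\<in>E. e \<subseteq> {v} \<union> S}"
            unfolding degree_def using fE by (intro card_mono) auto
          also have "\<dots> = card {b\<in>S. {v,b}\<in>E}"
            using edge_count[OF bp fA fB _ S(1), of "{v}"] vA by simp
          finally have "real (degree E' v) \<le> x v" by (simp add: x_def)
          thus ?thesis using 1 by (simp add: A'_def T_def)
        next
          case 2
          have "degree E' v \<le> degree E v" unfolding degree_def using fE
            by (intro card_mono) (auto simp: E'_def)
          thus ?thesis using dBv 2 S dle by force
        qed
      qed
      show ?thesis using sub avg deg Sne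
        by (intro exI[of _ V'] exI[of _ E']) (auto simp: V'_def)
    qed
  qed
qed

end
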